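(* Consider the static power control game with $K\ge 2$ transmitters described in the context, for a fixed realization of the channel gains $g_1,\dots,g_K$. Let $\mathcal{U}_{\mathcal{G}}=\{(u_1(\underline{p}),\dots,u_K(\underline{p})) : \underline{p}\in \prod_{i=1}^K(0,P_i^{\max}]\}$ be the achievable utility region, let $u^{\max}$ be an upper bound on the utilities of all transmitters (so $\mathcal{U}_{\mathcal{G}}\subseteq[0,u^{\max}]^K$), and let $\mathcal{U}_{\mathcal{G}}^C=[0,u^{\max}]^K\setminus\mathcal{U}_{\mathcal{G}}$. If $\mathcal{U}_{\mathcal{G}}$ is convex or $\mathcal{U}_{\mathcal{G}}^C$ is convex, then the utility vector $\underline{u}(\tilde{\underline{p}})=(u_1(\tilde{\underline{p}}),\dots,u_K(\tilde{\underline{p}}))$ is Pareto-optimal, i.e. there is no feasible power profile $\underline{p}$ with $u_i(\underline{p})\ge u_i(\tilde{\underline{p}})$ for all $i$ and strict inequality for some $i$.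
   Context: There are $K\ge2$ transmitters $i\in\mathcal{K}=\{1,\dots,K\}$ sending to one receiver; $\sigma^2>0$ is the noise variance; transmitter $i$ has complex channel gain $g_i$ with $|g_i|^2>0$, transmission rate $R_i>0$, and chooses a transmit power $p_i\in[0,P_i^{\max}]$. For a power profile $\underline{p}=(p_1,\dots,p_K)$, $\mathrm{SINR}_i=\frac{p_i|g_i|^2}{\sum_{j\neq i}p_j|g_j|^2+\sigma^2}$ and the utility (energy efficiency) of transmitter $i$ is $u_i(\underline{p})=\frac{R_i f(\mathrm{SINR}_i)}{p_i}$, where $f$ is a sigmoidal efficiency function (the block success rate), common to all users, with $f(0)=0$. It is assumed that there exists $x_0\in\,]0,\frac{1}{K-1}[$ such that $\frac{f''(x)}{f'(x)}-\frac{2(K-1)}{1-(K-1)x}$ is strictly positive on $]0,x_0[$ and strictly negative on $]x_0,\frac1{K-1}[$; under this assumption $\tilde\gamma$ denotes the unique solution in $]0,\frac1{K-1}[$ of $x[1-(K-1)x]f'(x)-f(x)=0$. The operating point is the power profile $\tilde{\underline{p}}$ with $\tilde p_i=\frac{\sigma^2}{|g_i|^2}\frac{\tilde\gamma}{1-(K-1)\tilde\gamma}$ for all $i$ (it gives every user SINR $\tilde\gamma$); the maximal powers $P_i^{\max}$ are assumed large enough that $\tilde p_i\le P_i^{\max}$. *)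

theory Defs
  imports "HOL-Analysis.Analysis"
begin

text \<open>Users are indexed by a finite type 'k; K = CARD('k).
  Power profiles are vectors p :: real^'k.\<close>

definition SINR :: "real \<Rightarrow> complex^'k \<Rightarrow> real^'k \<Rightarrow> 'k \<Rightarrow> real" where
  "SINR sigma2 g p i =
     p$i * (cmod (g$i))^2 / ((\<Sum>j\<in>UNIV - {i}. p$j * (cmod (g$j))^2) + sigma2)"

definition util :: "real^'k \<Rightarrow> (real \<Rightarrow> real) \<Rightarrow> real \<Rightarrow> complex^'k \<Rightarrow> real^'k \<Rightarrow> 'k \<Rightarrow> real" where
  "util R f sigma2 g p i = R$i * f (SINR sigma2 g p i) / p$i"

definition util_vec :: "real^'k \<Rightarrow> (real \<Rightarrow> real) \<Rightarrow> real \<Rightarrow> complex^'k \<Rightarrow> real^'k \<Rightarrow> real^'k" where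
  "util_vec R f sigma2 g p = (\<chi> i. util R f sigma2 g p i)"

definition feasible :: "real^'k \<Rightarrow> (real^'k) set" where
  "feasible Pmax = {p. \<forall>i. 0 < p$i \<and> p$i \<le> Pmax$i}"

definition util_region :: "real^'k \<Rightarrow> (real \<Rightarrow> real) \<Rightarrow> real \<Rightarrow> complex^'k \<Rightarrow> real^'k \<Rightarrow> (real^'k) set" where
  "util_region R f sigma2 g Pmax = util_vec R f sigma2 g ` feasible Pmax"

definition sigmoidal :: "(real \<Rightarrow> real) \<Rightarrow> bool" where
  "sigmoidal f \<longleftrightarrow>
     continuous_on {0..} f \<and>
     (\<forall>x>0. f differentiable (at x)) \<and>
     (\<forall>x>0. deriv f differentiable (at x)) \<and>
     strict_mono_on {0..} f \<and>
     (\<forall>x\<ge>0. 0 \<le> f x \<and> f x \<le> 1) \<and>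
     (\<exists>c>0. (\<forall>x. 0 < x \<and> x < c \<longrightarrow> deriv (deriv f) x \<ge> 0) \<and>
            (\<forall>x. c < x \<longrightarrow> deriv (deriv f) x \<le> 0)) \<and>
     (f \<longlongrightarrow> 1) at_top"

definition gamma_tilde :: "(real \<Rightarrow> real) \<Rightarrow> nat \<Rightarrow> real" where
  "gamma_tilde f K = (THE x. 0 < x \<and> x < 1 / (real K - 1) \<and>
       x * (1 - (real K - 1) * x) * deriv f x - f x = 0)"

definition p_tilde :: "(real \<Rightarrow> real) \<Rightarrow> real \<Rightarrow> complex^'k \<Rightarrow> real^'k" where
  "p_tilde f sigma2 g = (\<chi> i. sigma2 / (cmod (g$i))^2 *
      (gamma_tilde f CARD('k) / (1 - (real CARD('k) - 1) * gamma_tilde f CARD('k))))"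

end

theory Submission
  imports Defs
begin

lemma hp1: fixes a D X Y :: real shows "0 < a \<Longrightarrow> 0 < D \<Longrightarrow> X - Y = a*D \<Longrightarrow> Y < X"
  by (metis diff_gt_0_iff_gt mult_pos_pos)
lemma hp2: fixes a D X Y :: real shows "0 < a \<Longrightarrow> D \<le> 0 \<Longrightarrow> X - Y = a*D \<Longrightarrow> X \<le> Y"
  by (metis diff_le_0_iff_le less_eq_real_def mult_le_0_iff)
lemma hp3: fixes a D X Y :: real shows "0 < a \<Longrightarrow> D < 0 \<Longrightarrow> X - Y = a*D \<Longrightarrow> X < Y"
  by (metis diff_less_0_iff_less mult_pos_neg)
lemma hp4: fixes a D X Y :: real shows "0 < a \<Longrightarrow> X - Y = a*D \<Longrightarrow> Y < X \<Longrightarrow> 0 < D"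
  by (metis diff_gt_0_iff_gt zero_less_mult_pos)

lemma gt_analysis:
  fixes f :: "real \<Rightarrow> real" and k :: real
  assumes kpos: "k > 0"
    and cont: "continuous_on {0..} f"
    and d1: "\<forall>x>0. f differentiable (at x)"
    and d2: "\<forall>x>0. deriv f differentiable (at x)"
    and mono: "strict_mono_on {0..} f"
    and f0: "f 0 = 0"
    and x0: "0 < x0" "x0 < 1 / k"
    and pos: "\<forall>x. 0 < x \<and> x < x0 \<longrightarrow> deriv (deriv f) x / deriv f x - 2 * k / (1 - k * x) > 0"
    and neg: "\<forall>x. x0 < x \<and> x < 1 / k \<longrightarrow> deriv (deriv f) x / deriv f x - 2 * k / (1 - k * x) < 0"
  shows "\<exists>\<gamma>. 0 < \<gamma> \<and> \<gamma> < 1/k \<and> \<gamma> * (1 - k * \<gamma>) * deriv f \<gamma> - f \<gamma> = 0 \<and>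
     (\<forall>x. 0 < x \<and> x < 1/k \<and> x * (1 - k * x) * deriv f x - f x = 0 \<longrightarrow> x = \<gamma>) \<and>
     (\<forall>x. 0 < x \<and> x < 1/k \<and> x \<noteq> \<gamma> \<longrightarrow> f x * (1 - k*x) / x < f \<gamma> * (1 - k*\<gamma>) / \<gamma>)"
proof -
  define fd where "fd = deriv f"
  define fdd where "fdd = deriv (deriv f)"
  define N where "N x = x * (1 - k * x) * fd x - f x" for x
  have Df: "DERIV f x :> fd x" if "x > 0" for x
    using d1 that DERIV_deriv_iff_real_differentiable fd_def by blast
  have Dfd: "DERIV fd x :> fdd x" if "x > 0" for x
    using d2 that DERIV_deriv_iff_real_differentiable fd_def fdd_def by blast
  have fmono: "f a < f b" if "0 \<le> a" "a < b" for a b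
    using mono that unfolding strict_mono_on_def by auto
  have fpos: "f x > 0" if "x > 0" for x using fmono[of 0 x] that f0 by simp
  have fd_nn: "fd x \<ge> 0" if xp: "x > 0" for x
  proof (rule ccontr)
    assume "\<not> fd x \<ge> 0"
    then obtain d where d: "d > 0" "\<forall>h>0. h < d \<longrightarrow> f x > f (x + h)"
      using DERIV_neg_dec_right[OF Df[OF xp]] by force
    have "f x < f (x + d/2)" using fmono[of x "x + d/2"] xp d by simp
    with d show False by (metis half_gt_zero less_add_same_cancel2 less_asym' linorder_not_le
          order_less_le_trans field_sum_of_halves)
  qed
  have DN: "DERIV N x :> x * ((1 - k*x) * fdd x - 2 * k * fd x)" if "x > 0" for x
  proof -
    have "DERIV N x :> ((1 * (1 - k*x) + x * (- k)) * fd x + x * (1 - k*x) * fdd x - fd x)"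
      unfolding N_def[abs_def]
      by (rule derivative_eq_intros Df Dfd that refl | simp)+
    then show ?thesis by (simp add: algebra_simps)
  qed
  have Ncont: "continuous_on {a..b} N" if "0 < a" for a b
    by (rule continuous_at_imp_continuous_on) (metis DERIV_isCont DN atLeastAtMost_iff order_less_le_trans that)
  have kxg: "1 - k * x > 0" if "x < 1/k" for x
    using that kpos by (simp add: field_simps)
  have DNpos: "x * ((1 - k*x) * fdd x - 2 * k * fd x) > 0" if "0 < x" "x < x0" for x
  proof -
    have e: "fdd x / fd x - 2 * k / (1 - k * x) > 0" using pos that fd_def fdd_def by auto
    have kx: "1 - k * x > 0" using kxg[of x] that x0 by simp
    have "fd x \<noteq> 0"
    proof
      assume "fd x = 0"
      then have "fdd x / fd x - 2 * k / (1 - k * x) = - (2*k/(1-k*x))" by simp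
      moreover have "2*k/(1-k*x) > 0" using kx kpos by simp
      ultimately show False using e by linarith
    qed
    with fd_nn that have fp: "fd x > 0" by force
    have "2 * k / (1 - k * x) < fdd x / fd x" using e by simp
    then have "2 * k * fd x < fdd x * (1 - k*x)" using fp kx by (simp add: field_simps)
    then have "(1 - k*x) * fdd x - 2 * k * fd x > 0" by (simp add: algebra_simps)
    then show ?thesis using that by simp
  qed
  have DNneg: "x * ((1 - k*x) * fdd x - 2 * k * fd x) \<le> 0"
     "fd x > 0 \<Longrightarrow> x * ((1 - k*x) * fdd x - 2 * k * fd x) < 0"
     if "x0 < x" "x < 1/k" for x
  proof -
    have x: "x > 0" using that x0 by simp
    have e: "fdd x / fd x - 2 * k / (1 - k * x) < 0" using neg that fd_def fdd_def by auto
    have kx: "1 - k * x > 0" using kxg[of x] that by simp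
    have s: "x * ((1 - k*x) * fdd x - 2 * k * fd x) < 0" if fp: "fd x > 0"
    proof -
      have "fdd x / fd x < 2 * k / (1 - k * x)" using e by simp
      then have "fdd x * (1 - k*x) < 2 * k * fd x" using fp kx by (simp add: field_simps)
      then have "(1 - k*x) * fdd x - 2 * k * fd x < 0" by (simp add: algebra_simps)
      then show ?thesis using x by (simp add: mult_pos_neg)
    qed
    then show "fd x > 0 \<Longrightarrow> x * ((1 - k*x) * fdd x - 2 * k * fd x) < 0" .
    show "x * ((1 - k*x) * fdd x - 2 * k * fd x) \<le> 0"
    proof (cases "fd x > 0")
      case True then show ?thesis using s by simp
    next
      case False
      then have z: "fd x = 0" using fd_nn x by force
      have "fdd x = 0"
        by (rule DERIV_local_min[OF Dfd[OF x], of x]) (use x z fd_nn in auto)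
      then show ?thesis using z by simp
    qed
  qed
  have Ninc: "N a < N b" if as: "0 < a" "a < b" "b \<le> x0" for a b
  proof -
    have dd: "DERIV N x :> x * ((1 - k*x) * fdd x - 2 * k * fd x)" if "a \<le> x" "x \<le> b" for x
      using DN[of x] that as by linarith
    obtain z where z: "a < z" "z < b" "N b - N a = (b - a) * (z * ((1 - k*z) * fdd z - 2 * k * fd z))"
      using MVT2[OF \<open>a < b\<close>, of N "\<lambda>x. x * ((1 - k*x) * fdd x - 2 * k * fd x)", OF dd] by blast
    have p: "z * ((1 - k*z) * fdd z - 2 * k * fd z) > 0" using DNpos[of z] z as by linarith
    have "b - a > 0" using as by simp
    from hp1[OF this p z(3)] show ?thesis .
  qed
  have Nge: "N x \<ge> - f x" if "0 < x" "x < 1/k" for x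
  proof -
    have "1 - k*x > 0" using that kpos by (simp add: field_simps)
    then have "x * (1 - k * x) * fd x \<ge> 0" using that fd_nn by simp
    then show ?thesis unfolding N_def by simp
  qed
  have Npos: "N y > 0" if "0 < y" "y \<le> x0" for y
  proof (rule ccontr)
    assume "\<not> N y > 0"
    define y' where "y' = y/2"
    have y': "0 < y'" "y' < y" using that y'_def by auto
    have Ny': "N y' < 0" using Ninc[OF y'(1) y'(2) that(2)] \<open>\<not> N y > 0\<close> by simp
    have cc: "\<forall>x\<in>{0..}. \<forall>e>0. \<exists>d>0. \<forall>x'\<in>{0..}. dist x' x < d \<longrightarrow> dist (f x') (f x) < e"
      using cont by (simp only: continuous_on_iff)
    have "- N y' > 0" using Ny' by simp
    then obtain \<delta> where \<delta>: "\<delta> > 0" "\<forall>x'\<in>{0..}. dist x' 0 < \<delta> \<longrightarrow> dist (f x') (f 0) < - N y'"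
      using cc[rule_format, of 0 "- N y'"] by auto
    define x where "x = min (y'/2) (\<delta>/2)"
    have x: "0 < x" "x < y'" "x < \<delta>" using x_def \<delta> y' by auto
    have "\<bar>f x\<bar> < - N y'" using \<delta>(2)[rule_format, of x] x f0 by (simp add: dist_real_def)
    moreover have "N x \<ge> - f x" using Nge[of x] x y' that x0 by simp
    moreover have "N x < N y'" using Ninc[of x y'] x y' that by simp
    ultimately show False by linarith
  qed
  have Nle: "N b \<le> N a" if as: "x0 \<le> a" "a \<le> b" "b \<le> 1/k" for a b
  proof (cases "a = b")
    case False
    then have ab: "a < b" using as by simp
    have dd: "DERIV N x :> x * ((1 - k*x) * fdd x - 2 * k * fd x)" if "a \<le> x" "x \<le> b" for x
      using DN[of x] that as x0 by linarith
    obtain z where z: "a < z" "z < b" "N b - N a = (b - a) * (z * ((1 - k*z) * fdd z - 2 * k * fd z))"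
      using MVT2[OF ab, of N "\<lambda>x. x * ((1 - k*x) * fdd x - 2 * k * fd x)", OF dd] by blast
    have p: "z * ((1 - k*z) * fdd z - 2 * k * fd z) \<le> 0" using DNneg(1)[of z] z as x0 by linarith
    have "b - a > 0" using ab by simp
    from hp2[OF this p z(3)] show ?thesis .
  qed simp
  have Ndec: "N b < N a" if as: "x0 \<le> a" "a < b" "b \<le> 1/k" for a b
  proof -
    have dd: "DERIV f x :> fd x" if "a \<le> x" "x \<le> b" for x
      using Df[of x] that as x0 by linarith
    obtain z where z: "a < z" "z < b" "f b - f a = (b - a) * fd z"
      using MVT2[OF \<open>a < b\<close>, of f fd, OF dd] by blast
    have "f b - f a > 0" using fmono[of a b] as x0 by simp
    moreover have "b - a > 0" using as by simp
    ultimately have "fd z > 0" using z hp4[of "b-a" "f b" "f a" "fd z"] by simp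
    then have l: "z * ((1 - k*z) * fdd z - 2 * k * fd z) < 0" using DNneg(2)[of z] z as by linarith
    obtain d where d: "d > 0" "\<forall>h>0. h < d \<longrightarrow> N z > N (z + h)"
    proof -
      have "0 < z" using z as x0 by linarith
      from DERIV_neg_dec_right[OF DN[OF this] l] show ?thesis using that by blast
    qed
    define h where "h = min (d/2) ((b - z)/2)"
    have h1: "h \<le> (b-z)/2" "h \<le> d/2" unfolding h_def by (rule min.cobounded2, rule min.cobounded1)
    have h: "h > 0" "h < d" "z + h < b" using h_def h1 d z by auto
    have "N b \<le> N (z + h)" using Nle[of "z+h" b] h z as by simp
    also have "\<dots> < N z" using d h by simp
    also have "\<dots> \<le> N a" using Nle[of a z] z as by simp
    finally show ?thesis .
  qed
  have Nend: "N (1/k) < 0" unfolding N_def using fpos[of "1/k"] kpos by simp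
  obtain \<gamma> where g: "x0 \<le> \<gamma>" "\<gamma> \<le> 1/k" "N \<gamma> = 0"
  proof -
    have "N (1/k) \<le> 0" "0 \<le> N x0" "x0 \<le> 1/k" using Nend Npos[of x0] x0 by auto
    from IVT2'[OF this Ncont[OF x0(1)]] show ?thesis using that by blast
  qed
  have g2: "x0 < \<gamma>" "\<gamma> < 1/k" using g Npos[of x0] Nend x0 by (metis less_irrefl order_le_less)+
  have Nsign: "N x > 0" if "0 < x" "x < \<gamma>" for x
  proof (cases "x \<le> x0")
    case True then show ?thesis using Npos[of x] that by simp
  next
    case False then show ?thesis using Ndec[of x \<gamma>] that g by linarith
  qed
  have Nsign2: "N x < 0" if "\<gamma> < x" "x < 1/k" for x
    using Ndec[of \<gamma> x] that g by linarith
  define \<phi> where "\<phi> x = f x * (1 - k*x) / x" for x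
  have Dphi: "DERIV \<phi> x :> N x / x^2" if "x > 0" for x
  proof -
    have "DERIV \<phi> x :> ((fd x * (1 - k*x) + f x * (- k)) * x - f x * (1 - k*x) * 1) / (x * x)"
      unfolding \<phi>_def[abs_def]
      by (rule derivative_eq_intros Df that refl | use that in simp)+
    moreover have "((fd x * (1 - k*x) + f x * (- k)) * x - f x * (1 - k*x) * 1) / (x * x) = N x / x^2"
      unfolding N_def by (simp add: power2_eq_square algebra_simps)
    ultimately show ?thesis by simp
  qed
  have phi: "\<phi> x < \<phi> \<gamma>" if as: "0 < x" "x < 1/k" "x \<noteq> \<gamma>" for x
  proof (cases "x < \<gamma>")
    case True
    have dd: "DERIV \<phi> y :> N y / y^2" if "x \<le> y" "y \<le> \<gamma>" for y
      using Dphi[of y] that as by linarith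
    obtain z where z: "x < z" "z < \<gamma>" "\<phi> \<gamma> - \<phi> x = (\<gamma> - x) * (N z / z^2)"
      using MVT2[OF True, of \<phi> "\<lambda>x. N x / x^2", OF dd] by blast
    have "N z > 0" using Nsign[of z] z as by linarith
    moreover have "z^2 > 0" using z as by simp
    ultimately have "N z / z^2 > 0" by simp
    moreover have "\<gamma> - x > 0" using True by simp
    ultimately show ?thesis using z hp1[of "\<gamma> - x" "N z / z^2" "\<phi> \<gamma>" "\<phi> x"] by blast
  next
    case False
    then have xg: "\<gamma> < x" using as by simp
    have dd: "DERIV \<phi> y :> N y / y^2" if "\<gamma> \<le> y" "y \<le> x" for y
      using Dphi[of y] that g2 x0 by linarith
    obtain z where z: "\<gamma> < z" "z < x" "\<phi> x - \<phi> \<gamma> = (x - \<gamma>) * (N z / z^2)"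
      using MVT2[OF xg, of \<phi> "\<lambda>x. N x / x^2", OF dd] by blast
    have "N z < 0" using Nsign2[of z] z as by linarith
    then have "N z / z^2 < 0" using z g2 x0 by (simp add: divide_neg_pos)
    moreover have "x - \<gamma> > 0" using xg by simp
    ultimately show ?thesis using z hp3[of "x - \<gamma>" "N z / z^2" "\<phi> x" "\<phi> \<gamma>"] by blast
  qed
  show ?thesis
  proof (intro exI conjI allI impI)
    show "0 < \<gamma>" "\<gamma> < 1/k" using g2 x0 by auto
    show "\<gamma> * (1 - k * \<gamma>) * deriv f \<gamma> - f \<gamma> = 0" using g N_def fd_def by simp
  next
    fix x assume x: "0 < x \<and> x < 1/k \<and> x * (1 - k * x) * deriv f x - f x = 0"
    then have "N x = 0" using N_def fd_def by simp
    then show "x = \<gamma>" using Nsign[of x] Nsign2[of x] x by (metis less_irrefl linorder_neqE)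
  next
    fix x assume "0 < x \<and> x < 1/k \<and> x \<noteq> \<gamma>"
    then show "f x * (1 - k*x) / x < f \<gamma> * (1 - k*\<gamma>) / \<gamma>" using phi \<phi>_def by auto
  qed
qed


lemma alg_us:
  fixes R F p a sgm k :: real
  assumes "p > 0" "a > 0" "sgm > 0" "k*(p*a)+sgm > 0"
  shows "R*F/p = R*a/sgm * (F*(1-k*(p*a/(k*(p*a)+sgm)))/(p*a/(k*(p*a)+sgm)))"
proof -
  define D where "D = k*(p*a)+sgm"
  have D: "D > 0" using assms D_def by simp
  have "1-k*(p*a/D) = sgm/D" using D unfolding D_def by (simp add: field_simps)
  moreover have "(sgm/D)/(p*a/D) = sgm/(p*a)" using D by simp
  ultimately have "(1-k*(p*a/D))/(p*a/D) = sgm/(p*a)" by simp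
  then have "F*(1-k*(p*a/D))/(p*a/D) = F * sgm/(p*a)" by (metis times_divide_eq_right)
  then show ?thesis unfolding D_def[symmetric] using assms by (simp add: field_simps)
qed

theorem proposition5:
  fixes g :: "complex^'k" and R Pmax :: "real^'k"
    and sigma2 umax :: real and f :: "real \<Rightarrow> real"
  assumes K2: "CARD('k) \<ge> 2"
    and sigma_pos: "sigma2 > 0"
    and g_pos: "\<forall>i. (cmod (g$i))^2 > 0"
    and R_pos: "\<forall>i. R$i > 0"
    and sigm: "sigmoidal f"
    and f0: "f 0 = 0"
    and x0: "\<exists>x0. 0 < x0 \<and> x0 < 1 / (real CARD('k) - 1) \<and>
              (\<forall>x. 0 < x \<and> x < x0 \<longrightarrow>
                 deriv (deriv f) x / deriv f x - 2 * (real CARD('k) - 1) / (1 - (real CARD('k) - 1) * x) > 0) \<and>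
              (\<forall>x. x0 < x \<and> x < 1 / (real CARD('k) - 1) \<longrightarrow>
                 deriv (deriv f) x / deriv f x - 2 * (real CARD('k) - 1) / (1 - (real CARD('k) - 1) * x) < 0)"
    and Pmax_large: "\<forall>i. (p_tilde f sigma2 g :: real^'k)$i \<le> Pmax$i"
    and umax: "util_region R f sigma2 g Pmax \<subseteq> {v. \<forall>i. 0 \<le> v$i \<and> v$i \<le> umax}"
    and cvx: "convex (util_region R f sigma2 g Pmax) \<or>
              convex ({v. \<forall>i. 0 \<le> v$i \<and> v$i \<le> umax} - util_region R f sigma2 g Pmax)"
  shows "\<not> (\<exists>p\<in>feasible Pmax.
              (\<forall>i. util R f sigma2 g p i \<ge> util R f sigma2 g (p_tilde f sigma2 g) i) \<and>
              (\<exists>i. util R f sigma2 g p i > util R f sigma2 g (p_tilde f sigma2 g) i))"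
proof
  assume "\<exists>p\<in>feasible Pmax.
              (\<forall>i. util R f sigma2 g p i \<ge> util R f sigma2 g (p_tilde f sigma2 g) i) \<and>
              (\<exists>i. util R f sigma2 g p i > util R f sigma2 g (p_tilde f sigma2 g) i)"
  then obtain p where pf: "p \<in> feasible Pmax"
    and ge: "\<forall>i. util R f sigma2 g p i \<ge> util R f sigma2 g (p_tilde f sigma2 g) i"
    and strict: "\<exists>i. util R f sigma2 g p i > util R f sigma2 g (p_tilde f sigma2 g) i" by blast
  define k where "k = real CARD('k) - 1"
  have k1: "k \<ge> 1" using K2 unfolding k_def by simp
  have kpos: "k > 0" using k1 by simp
  obtain x0v where x0v: "0 < x0v" "x0v < 1 / k"
    "\<forall>x. 0 < x \<and> x < x0v \<longrightarrow> deriv (deriv f) x / deriv f x - 2 * k / (1 - k * x) > 0"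
    "\<forall>x. x0v < x \<and> x < 1 / k \<longrightarrow> deriv (deriv f) x / deriv f x - 2 * k / (1 - k * x) < 0"
    using x0 unfolding k_def by blast
  have sg: "continuous_on {0..} f" "\<forall>x>0. f differentiable (at x)" "\<forall>x>0. deriv f differentiable (at x)"
     "strict_mono_on {0..} f" using sigm unfolding sigmoidal_def by blast+
  obtain \<gamma> where gam: "0 < \<gamma>" "\<gamma> < 1/k" "\<gamma> * (1 - k * \<gamma>) * deriv f \<gamma> - f \<gamma> = 0"
     and guniq: "\<forall>x. 0 < x \<and> x < 1/k \<and> x * (1 - k * x) * deriv f x - f x = 0 \<longrightarrow> x = \<gamma>"
     and gmax: "\<forall>x. 0 < x \<and> x < 1/k \<and> x \<noteq> \<gamma> \<longrightarrow> f x * (1 - k*x) / x < f \<gamma> * (1 - k*\<gamma>) / \<gamma>"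
    using gt_analysis[OF kpos sg f0 x0v] by blast
  have gt: "gamma_tilde f CARD('k) = \<gamma>"
    unfolding gamma_tilde_def k_def[symmetric]
  proof (rule the_equality)
    show "0 < \<gamma> \<and> \<gamma> < 1 / k \<and> \<gamma> * (1 - k * \<gamma>) * deriv f \<gamma> - f \<gamma> = 0"
      using gam by blast
  next
    fix x assume "0 < x \<and> x < 1 / k \<and> x * (1 - k * x) * deriv f x - f x = 0"
    then show "x = \<gamma>" using guniq by blast
  qed
  have kg: "1 - k * \<gamma> > 0" using gam kpos by (simp add: field_simps)
  define a where "a j = (cmod (g$j))^2" for j
  have apos: "a j > 0" for j using g_pos a_def by simp
  define W where "W = sigma2 * \<gamma> / (1 - k * \<gamma>)"
  have Wpos: "W > 0" using sigma_pos gam kg W_def by simp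
  define pt where "pt = (p_tilde f sigma2 g :: real^'k)"
  have ptj: "pt$j = W / a j" for j
    unfolding pt_def p_tilde_def gt k_def[symmetric] W_def a_def by simp
  have ptw: "pt$j * (cmod (g$j))^2 = W" for j
    using ptj[of j] apos[of j] unfolding a_def by simp
  have card: "real (card (UNIV - {j::'k})) = k" for j
  proof -
    have "card (UNIV - {j}) = CARD('k) - 1" by (simp add: card_Diff_singleton)
    then show ?thesis unfolding k_def using K2 by simp
  qed
  have SINRpt: "SINR sigma2 g pt j = \<gamma>" for j
  proof -
    have "SINR sigma2 g pt j = W / (k * W + sigma2)"
      unfolding SINR_def ptw using card[of j] by simp
    also have "\<dots> = \<gamma>" unfolding W_def using kg sigma_pos
      by (simp add: field_simps)
    finally show ?thesis .
  qed
  define C where "C j = R$j * a j / sigma2" for j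
  define \<phi> where "\<phi> x = f x * (1 - k*x) / x" for x
  have upt: "util R f sigma2 g pt j = C j * \<phi> \<gamma>" for j
    unfolding util_def SINRpt ptj C_def \<phi>_def W_def using apos[of j] sigma_pos kg gam
    by (simp add: field_simps)
  define w where "w j = p$j * (cmod (g$j))^2" for j
  have ppos: "p$j > 0" for j using pf unfolding feasible_def by auto
  have wpos: "w j > 0" for j using ppos[of j] apos[of j] unfolding w_def a_def by simp
  obtain i where imin: "\<forall>j. w i \<le> w j"
  proof -
    have "finite (range w)" by simp
    then have "Min (range w) \<in> range w" by (intro Min_in) auto
    then obtain i where ii: "Min (range w) = w i" by blast
    have "\<forall>j. w i \<le> w j"
    proof
      fix j show "w i \<le> w j" using Min_le[OF \<open>finite (range w)\<close>, of "w j"] ii by simp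
    qed
    then show ?thesis by (rule that)
  qed
  define S where "S = (\<Sum>j\<in>UNIV - {i}. w j)"
  have Sge: "S \<ge> k * w i"
  proof -
    have "S \<ge> (\<Sum>j\<in>UNIV - {i}. w i)" unfolding S_def by (rule sum_mono) (use imin in auto)
    then show ?thesis using card[of i] by simp
  qed
  have SINRp: "SINR sigma2 g p i = w i / (S + sigma2)"
    unfolding SINR_def S_def w_def by simp
  define s where "s = w i / (k * w i + sigma2)"
  have den: "k * w i + sigma2 > 0" using kpos wpos[of i] sigma_pos by (simp add: add_pos_pos)
  have spos: "s > 0" unfolding s_def using den wpos[of i] by simp
  have sk: "s < 1/k" unfolding s_def using den wpos[of i] kpos sigma_pos by (simp add: field_simps)
  have SINRle: "SINR sigma2 g p i \<le> s" unfolding SINRp s_def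
    using Sge den wpos[of i] by (intro divide_left_mono) (auto intro: mult_pos_pos)
  have Spos: "S + sigma2 > 0" using Sge den by linarith
  have SINRnn: "SINR sigma2 g p i \<ge> 0" unfolding SINRp using wpos[of i] Spos by simp
  have fmono: "f x < f y" if "0 \<le> x" "x < y" for x y
    using sg(4) that unfolding strict_mono_on_def by auto
  have fle: "f (SINR sigma2 g p i) \<le> f s"
    using fmono[of "SINR sigma2 g p i" s] SINRle SINRnn by (cases "SINR sigma2 g p i = s") auto
  have Rpos: "R$i > 0" using R_pos by simp
  have us: "R$i * f s / p$i = C i * \<phi> s"
    unfolding C_def \<phi>_def s_def w_def a_def
    by (rule alg_us) (use apos[of i] sigma_pos den ppos[of i] in \<open>auto simp: w_def a_def\<close>)
  have up_le: "util R f sigma2 g p i \<le> C i * \<phi> s"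
    unfolding util_def us[symmetric] using fle Rpos ppos[of i]
    by (simp add: divide_right_mono)
  have Cpos: "C i > 0" unfolding C_def using Rpos apos[of i] sigma_pos by simp
  have gei: "util R f sigma2 g p i \<ge> C i * \<phi> \<gamma>" using ge upt pt_def by metis
  have "C i * \<phi> \<gamma> \<le> C i * \<phi> s" using up_le gei by linarith
  then have phis: "\<phi> s \<ge> \<phi> \<gamma>" using Cpos by (simp add: mult_le_cancel_left_pos)
  have s_eq: "s = \<gamma>"
  proof (rule ccontr)
    assume "s \<noteq> \<gamma>"
    then have "\<phi> s < \<phi> \<gamma>" using gmax spos sk unfolding \<phi>_def by blast
    then show False using phis by simp
  qed
  have fge: "f (SINR sigma2 g p i) \<ge> f s"
  proof -
    have "C i * \<phi> s \<le> R$i * f (SINR sigma2 g p i) / p$i"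
      using gei s_eq unfolding util_def by simp
    then have "R$i * f s / p$i \<le> R$i * f (SINR sigma2 g p i) / p$i" using us by simp
    then have "R$i * f s \<le> R$i * f (SINR sigma2 g p i)" using ppos[of i] by (simp add: divide_le_cancel)
    then show ?thesis using Rpos by simp
  qed
  have SINReq: "SINR sigma2 g p i = s"
    using fmono[of "SINR sigma2 g p i" s] fge SINRle SINRnn by (cases "SINR sigma2 g p i = s") auto
  have Seq: "S = k * w i"
  proof -
    have "w i / (S + sigma2) = w i / (k * w i + sigma2)" using SINReq SINRp s_def by simp
    moreover have "S + sigma2 > 0" using Sge den by linarith
    ultimately have "S + sigma2 = k * w i + sigma2" using wpos[of i] den
      by (simp add: field_simps)
    then show ?thesis by simp
  qed
  have weq: "w j = w i" for j
  proof (cases "j = i")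
    case False
    have "(\<Sum>j\<in>UNIV - {i}. w j - w i) = S - k * w i"
      unfolding S_def using card[of i] by (simp add: sum_subtractf)
    then have "(\<Sum>j\<in>UNIV - {i}. w j - w i) = 0" using Seq by simp
    then have "\<forall>j\<in>UNIV - {i}. w j - w i = 0"
      using sum_nonneg_eq_0_iff[of "UNIV - {i}" "\<lambda>j. w j - w i"] imin by auto
    then show ?thesis using False by auto
  qed simp
  have wiW: "w i = W"
  proof -
    have "w i / (k * w i + sigma2) = \<gamma>" using s_eq s_def by simp
    then have "w i = \<gamma> * (k * w i + sigma2)" using den by (simp add: field_simps)
    then have "w i * (1 - k * \<gamma>) = sigma2 * \<gamma>" by (simp add: algebra_simps)
    then show ?thesis unfolding W_def using kg by (simp add: field_simps)
  qed
  have "p = pt"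
  proof (rule vec_eq_iff[THEN iffD2], rule allI)
    fix j
    have "p$j * a j = W" using weq[of j] wiW unfolding w_def a_def by simp
    then show "p$j = pt$j" unfolding ptj using apos[of j] by (simp add: field_simps)
  qed
  then show False using strict pt_def by simp
qed

end
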